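(* In the random coefficients perturbed utility model described in the context, let the average structural function factor as in the context (so that $\overline{Y}(x,\beta)$ is defined) and let Assumption 2 hold. Assume $\beta_{k,1}=1$ almost surely (under $\nu$) for each $k\in\{1,\dots,K\}$. For each $k$ let $-\infty\le\underline{x}_{k,1}\le\overline{x}_{k,1}\le\infty$, and suppose $\overline{Y}(x)$ is identified (known) for all $x=(x_1',\dots,x_K')'$ satisfying $x_{k,1}\in[\underline{x}_{k,1},\overline{x}_{k,1}]$ for each $k$ and $x_{k,j}=0$ for all $j>1$. Then differences $V(u)-V(u')$ are identified for all $u,u'\in\times_{k=1}^K[\underline{x}_{k,1},\overline{x}_{k,1}]$. In particular, if $\underline{x}_{k,1}=-\infty$ and $\overline{x}_{k,1}=\infty$ for each $k$, then $V$ is identified up to an additive constant.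
   Context: Model. There are $K$ goods. For each good $k\in\{1,\dots,K\}$ there is a covariate vector $x_k=(x_{k,1},\dots,x_{k,d_k})'\in\mathbb{R}^{d_k}$ and a random coefficient vector $\beta_k=(\beta_{k,1},\dots,\beta_{k,d_k})'\in\mathbb{R}^{d_k}$; write $x=(x_1',\dots,x_K')'$ and $\beta=(\beta_1',\dots,\beta_K')'$. Let $\varepsilon$ be an unobservable of unrestricted dimension in a measurable space $E$, $B\subseteq\mathbb{R}^K$ a feasibility set and $D:B\times E\to\mathbb{R}\cup\{-\infty\}$ a disturbance. Choices satisfy $Y(x,\beta,\varepsilon)\in\arg\max_{y\in B}\sum_{k=1}^K y_k(\beta_k'x_k)+D(y,\varepsilon)$ (argmax nonempty). The average structural function is $\overline{Y}(x)=\int Y(x,\beta,\varepsilon)\,d\tau(\beta,\varepsilon)$, where $\tau=\nu\otimes\mu$ is a product of a probability measure $\nu$ over $\beta$ and a probability measure $\mu$ over $\varepsilon$ (slope–intercept independence), not depending on $x$, and $\overline{Y}(x)$ is finite. Define $\overline{Y}(x,\beta)=\int Y(x,\beta,\varepsilon)\,d\mu(\varepsilon)$, so $\overline{Y}(x)=\int\overline{Y}(x,\beta)\,d\nu(\beta)$. Let $\overline{B}$ be the convex hull of $B$ and $\overline{D}(y)=\sup\{\int D(\tilde Y(\varepsilon),\varepsilon)\,d\mu(\varepsilon):\tilde Y:E\to B\text{ measurable},\ \int\tilde Y\,d\mu=y\}$ ($\sup\emptyset=-\infty$). Assumption 2: (i) $\overline{Y}(x,\beta)$ equals (is the unique element of)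 $\arg\max_{y\in\overline{B}}\sum_k y_k(\beta_k'x_k)+\overline{D}(y)$; (ii) $\overline{B}$ is nonempty, closed, convex; (iii) $\overline{D}:\mathbb{R}^K\to\mathbb{R}\cup\{-\infty\}$ is concave, upper semicontinuous, finite at some $y\in\overline{B}$. Define the integrated indirect utility $V(u)=\max_{y\in\overline{B}}\sum_k y_ku_k+\overline{D}(y)$ for $u\in\mathbb{R}^K$. Identification: a quantity is identified if it is uniquely determined by the known values of $\overline{Y}$ on the stated region, i.e. all specifications satisfying the hypotheses and generating the same $\overline{Y}$ there yield the same value. *)

theory Defs
  imports "HOL-Analysis.Analysis" "HOL-Probability.Probability"
begin

text \<open>Goods are indexed by a finite type 'k (so K = CARD('k)).  The covariate
vector of good k is x k :: nat => real with components x k 0, ..., x k (d k - 1)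
(index 0 corresponds to the paper's index 1); similarly for beta.\<close>

definition idx :: "('k::finite \<Rightarrow> nat) \<Rightarrow> ('k \<Rightarrow> nat \<Rightarrow> real) \<Rightarrow> ('k \<Rightarrow> nat \<Rightarrow> real) \<Rightarrow> real^'k" where
  "idx d b x = (\<chi> k. \<Sum>j<d k. b k j * x k j)"

definition covariates :: "('k \<Rightarrow> nat) \<Rightarrow> ('k \<Rightarrow> nat \<Rightarrow> real) set" where
  "covariates d = {x. \<forall>k j. d k \<le> j \<longrightarrow> x k j = 0}"

definition is_choice :: "(real^'k) set \<Rightarrow> (real^'k \<Rightarrow> 'e \<Rightarrow> ereal) \<Rightarrow> real^'k \<Rightarrow> 'e \<Rightarrow> real^'k \<Rightarrow> bool" where
  "is_choice B D u e y \<longleftrightarrow> y \<in> B \<and> (\<forall>z\<in>B. ereal (z \<bullet> u) + D z e \<le> ereal (y \<bullet> u) + D y e)"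

text \<open>The random coefficients perturbed utility model, with slope-intercept
independence (tau = nu (x) mu), with a finite average structural function and with
Y(x,beta,.) mu-integrable for every x, beta (so that Ybar(x,beta) is defined).\<close>
definition rc_model ::
  "('k::finite \<Rightarrow> nat) \<Rightarrow> ('k \<Rightarrow> nat \<Rightarrow> real) measure \<Rightarrow> 'e measure \<Rightarrow> (real^'k) set
   \<Rightarrow> (real^'k \<Rightarrow> 'e \<Rightarrow> ereal) \<Rightarrow> (('k \<Rightarrow> nat \<Rightarrow> real) \<Rightarrow> ('k \<Rightarrow> nat \<Rightarrow> real) \<Rightarrow> 'e \<Rightarrow> real^'k) \<Rightarrow> bool" where
  "rc_model d nu mu B D Y \<longleftrightarrow>
     prob_space nu \<and> prob_space mu \<and> (\<forall>k. 1 \<le> d k) \<and>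
     (\<forall>y\<in>B. \<forall>e\<in>space mu. D y e \<noteq> \<infinity>) \<and>
     (\<forall>x\<in>covariates d. \<forall>b\<in>space nu. \<forall>e\<in>space mu. is_choice B D (idx d b x) e (Y x b e)) \<and>
     (\<forall>x\<in>covariates d. integrable (nu \<Otimes>\<^sub>M mu) (\<lambda>(b, e). Y x b e)) \<and>
     (\<forall>x\<in>covariates d. \<forall>b\<in>space nu. integrable mu (Y x b))"

definition asf :: "('b measure) \<Rightarrow> 'e measure \<Rightarrow> ('x \<Rightarrow> 'b \<Rightarrow> 'e \<Rightarrow> real^'k) \<Rightarrow> 'x \<Rightarrow> real^'k" where
  "asf nu mu Y x = (\<integral>be. Y x (fst be) (snd be) \<partial>(nu \<Otimes>\<^sub>M mu))"

definition asf_beta :: "'e measure \<Rightarrow> ('x \<Rightarrow> 'b \<Rightarrow> 'e \<Rightarrow> real^'k) \<Rightarrow> 'x \<Rightarrow> 'b \<Rightarrow> real^'k" where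
  "asf_beta mu Y x b = (\<integral>e. Y x b e \<partial>mu)"

text \<open>Integral of an extended-real valued function: positive part minus negative
part; it is taken to be -infinity when the negative part has infinite integral
(in particular when the integral is undefined, so such functions do not contribute
to a supremum).\<close>
definition ext_integral :: "'e measure \<Rightarrow> ('e \<Rightarrow> ereal) \<Rightarrow> ereal" where
  "ext_integral M f =
     (let p = (\<integral>\<^sup>+ e. e2ennreal (f e) \<partial>M); n = (\<integral>\<^sup>+ e. e2ennreal (- f e) \<partial>M)
      in if n = \<infinity> then - \<infinity> else enn2ereal p - enn2ereal n)"

text \<open>Integrated disturbance Dbar (sup of the empty set is -infinity).\<close>
definition Dbar :: "'e measure \<Rightarrow> (real^'k::finite) set \<Rightarrow> (real^'k \<Rightarrow> 'e \<Rightarrow> ereal) \<Rightarrow> real^'k \<Rightarrow> ereal" where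
  "Dbar mu B D y =
     (SUP Yt \<in> {Yt. Yt \<in> borel_measurable mu \<and> (\<forall>e\<in>space mu. Yt e \<in> B) \<and>
                  integrable mu Yt \<and> (\<integral>e. Yt e \<partial>mu) = y}.
        ext_integral mu (\<lambda>e. D (Yt e) e))"

definition argmax_on :: "'a set \<Rightarrow> ('a \<Rightarrow> ereal) \<Rightarrow> 'a set" where
  "argmax_on S g = {y\<in>S. \<forall>z\<in>S. g z \<le> g y}"

definition concave_ereal :: "('a::real_vector \<Rightarrow> ereal) \<Rightarrow> bool" where
  "concave_ereal f \<longleftrightarrow> (\<forall>y z. \<forall>t::real. 0 \<le> t \<and> t \<le> 1 \<longrightarrow>
      ereal t * f y + ereal (1 - t) * f z \<le> f (t *\<^sub>R y + (1 - t) *\<^sub>R z))"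

definition usc_ereal :: "('a::topological_space \<Rightarrow> ereal) \<Rightarrow> bool" where
  "usc_ereal f \<longleftrightarrow> (\<forall>y. Limsup (at y) f \<le> f y)"

definition assumption2 ::
  "('k::finite \<Rightarrow> nat) \<Rightarrow> ('k \<Rightarrow> nat \<Rightarrow> real) measure \<Rightarrow> 'e measure \<Rightarrow> (real^'k) set
   \<Rightarrow> (real^'k \<Rightarrow> 'e \<Rightarrow> ereal) \<Rightarrow> (('k \<Rightarrow> nat \<Rightarrow> real) \<Rightarrow> ('k \<Rightarrow> nat \<Rightarrow> real) \<Rightarrow> 'e \<Rightarrow> real^'k) \<Rightarrow> bool" where
  "assumption2 d nu mu B D Y \<longleftrightarrow>
     (\<forall>x\<in>covariates d. \<forall>b\<in>space nu.
        argmax_on (convex hull B) (\<lambda>y. ereal (y \<bullet> idx d b x) + Dbar mu B D y) = {asf_beta mu Y x b}) \<and>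
     convex hull B \<noteq> {} \<and> closed (convex hull B) \<and>
     (\<forall>y. Dbar mu B D y \<noteq> \<infinity>) \<and> concave_ereal (Dbar mu B D) \<and> usc_ereal (Dbar mu B D) \<and>
     (\<exists>y\<in>convex hull B. Dbar mu B D y \<noteq> - \<infinity>)"

definition Vind :: "'e measure \<Rightarrow> (real^'k::finite) set \<Rightarrow> (real^'k \<Rightarrow> 'e \<Rightarrow> ereal) \<Rightarrow> real^'k \<Rightarrow> ereal" where
  "Vind mu B D u = (SUP y \<in> convex hull B. ereal (y \<bullet> u) + Dbar mu B D y)"

end

theory Submission imports Defs begin
lemma telescope_bounds:
  fixes f s :: "real \<Rightarrow> real" and n :: nat
  assumes sub: "\<And>t r. 0 \<le> t \<Longrightarrow> t \<le> 1 \<Longrightarrow> 0 \<le> r \<Longrightarrow> r \<le> 1 \<Longrightarrow> f t + s t * (r - t) \<le> f r"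
    and n: "n > 0"
  shows "(\<Sum>i<n. s (real i / n)) / n \<le> f 1 - f 0 \<and> f 1 - f 0 \<le> (\<Sum>i<n. s (real (Suc i) / n)) / n"
proof -
  let ?t = "\<lambda>i. real i / real n"
  have tin: "0 \<le> ?t i \<and> ?t i \<le> 1" if "i \<le> n" for i using that n by auto
  have d: "?t (Suc i) - ?t i = 1 / n" for i using n by (simp add: field_simps)
  have lo: "s (?t i) / n \<le> f (?t (Suc i)) - f (?t i)" if "i < n" for i
    using sub[of "?t i" "?t (Suc i)"] tin[of i] tin[of "Suc i"] that d[of i] by auto
  have hi: "f (?t (Suc i)) - f (?t i) \<le> s (?t (Suc i)) / n" if "i < n" for i
  proof -
    have e: "?t i - ?t (Suc i) = - (1 / n)" using d[of i] by linarith
    have "f (?t (Suc i)) + s (?t (Suc i)) * (?t i - ?t (Suc i)) \<le> f (?t i)"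
      using sub[of "?t (Suc i)" "?t i"] tin[of i] tin[of "Suc i"] that by auto
    then show ?thesis unfolding e by simp
  qed
  have tel: "(\<Sum>i<n. f (?t (Suc i)) - f (?t i)) = f 1 - f 0"
    using sum_lessThan_telescope[of "\<lambda>i. f (?t i)" n] n by simp
  have "(\<Sum>i<n. s (?t i)) / n = (\<Sum>i<n. s (?t i) / n)" by (simp add: sum_divide_distrib)
  also have "\<dots> \<le> (\<Sum>i<n. f (?t (Suc i)) - f (?t i))" by (rule sum_mono) (use lo in auto)
  finally have A: "(\<Sum>i<n. s (?t i)) / n \<le> f 1 - f 0" using tel by simp
  have "(\<Sum>i<n. f (?t (Suc i)) - f (?t i)) \<le> (\<Sum>i<n. s (?t (Suc i)) / n)" by (rule sum_mono) (use hi in auto)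
  also have "\<dots> = (\<Sum>i<n. s (?t (Suc i))) / n" by (simp add: sum_divide_distrib)
  finally have B: "f 1 - f 0 \<le> (\<Sum>i<n. s (?t (Suc i))) / n" using tel by simp
  show ?thesis using A B by simp
qed

lemma common_subgradient:
  fixes f g s :: "real \<Rightarrow> real"
  assumes subf: "\<And>t r. 0 \<le> t \<Longrightarrow> t \<le> 1 \<Longrightarrow> 0 \<le> r \<Longrightarrow> r \<le> 1 \<Longrightarrow> f t + s t * (r - t) \<le> f r"
    and subg: "\<And>t r. 0 \<le> t \<Longrightarrow> t \<le> 1 \<Longrightarrow> 0 \<le> r \<Longrightarrow> r \<le> 1 \<Longrightarrow> g t + s t * (r - t) \<le> g r"
  shows "f 1 - f 0 = g 1 - g 0"
proof (rule ccontr)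
  assume ne: "f 1 - f 0 \<noteq> g 1 - g 0"
  let ?c = "\<bar>s 1 - s 0\<bar>"
  have bnd: "\<bar>(f 1 - f 0) - (g 1 - g 0)\<bar> \<le> ?c / n" if n: "n > 0" for n :: nat
  proof -
    have tel: "(\<Sum>i<n. s (real (Suc i) / n)) - (\<Sum>i<n. s (real i / n)) = s 1 - s 0"
      using sum_lessThan_telescope[of "\<lambda>i. s (real i / real n)" n] n
      by (simp add: sum_subtractf[symmetric])
    have "(\<Sum>i<n. s (real (Suc i) / n)) / n - (\<Sum>i<n. s (real i / n)) / n = (s 1 - s 0) / n"
      using tel by (metis diff_divide_distrib)
    then show ?thesis using telescope_bounds[OF subf n] telescope_bounds[OF subg n]
      by (auto simp: abs_le_iff divide_le_cancel) (smt (verit, ccfv_SIG) divide_right_mono of_nat_0_le_iff)+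
  qed
  define \<delta> where "\<delta> = \<bar>(f 1 - f 0) - (g 1 - g 0)\<bar>"
  have dpos: "\<delta> > 0" using ne by (simp add: \<delta>_def)
  obtain n :: nat where nn: "?c / \<delta> < n" using reals_Archimedean2 by blast
  have npos: "n > 0" using nn dpos by (smt (verit, ccfv_SIG) divide_nonneg_nonneg of_nat_0_less_iff abs_ge_zero)
  have "?c < n * \<delta>" using nn dpos by (simp add: pos_divide_less_eq mult.commute)
  hence "?c / n < \<delta>" using npos by (simp add: divide_less_eq mult.commute)
  with bnd[OF npos] show False by (simp add: \<delta>_def)
qed
definition xw :: "real^'k \<Rightarrow> ('k \<Rightarrow> nat \<Rightarrow> real)" where
  "xw w = (\<lambda>k j. if j = 0 then w $ k else 0)"

lemma model_facts:
  fixes d :: "'k::finite \<Rightarrow> nat" and w :: "real^'k"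
  assumes model: "rc_model d nu mu B D Y" and A2: "assumption2 d nu mu B D Y"
    and unit: "AE b in nu. \<forall>k. b k 0 = 1"
  shows "\<exists>V. Vind mu B D w = ereal V \<and>
     (\<forall>w'. ereal (V + asf nu mu Y (xw w) \<bullet> (w' - w)) \<le> Vind mu B D w')"
proof -
  have pn: "prob_space nu" and pm: "prob_space mu" and d1: "\<forall>k. 1 \<le> d k"
    and integ: "\<forall>x\<in>covariates d. integrable (nu \<Otimes>\<^sub>M mu) (\<lambda>(b, e). Y x b e)"
    using model unfolding rc_model_def by auto
  have am: "\<forall>x\<in>covariates d. \<forall>b\<in>space nu.
        argmax_on (convex hull B) (\<lambda>y. ereal (y \<bullet> idx d b x) + Dbar mu B D y) = {asf_beta mu Y x b}"
    and ninf: "\<forall>y. Dbar mu B D y \<noteq> \<infinity>"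
    and ex: "\<exists>y\<in>convex hull B. Dbar mu B D y \<noteq> - \<infinity>"
    using A2 unfolding assumption2_def by auto
  let ?x = "xw w"
  have xc: "?x \<in> covariates d" using d1 unfolding covariates_def xw_def
    by (auto, metis not_one_le_zero)
  have idxw: "idx d b ?x = w" if "\<forall>k. b k 0 = 1" for b
  proof -
    have "(\<Sum>j<d k. b k j * ?x k j) = w $ k" for k
    proof -
      have "(\<Sum>j<d k. b k j * ?x k j) = (\<Sum>j\<in>{0}. b k j * ?x k j)"
        by (rule sum.mono_neutral_right) (use d1 in \<open>auto simp: xw_def Suc_le_eq\<close>)
      then show ?thesis using that by (simp add: xw_def)
    qed
    then show ?thesis unfolding idx_def by (simp add: vec_eq_iff)
  qed
  let ?f = "\<lambda>y. ereal (y \<bullet> w) + Dbar mu B D y"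
  have "\<exists>b\<in>space nu. \<forall>k. b k 0 = 1"
  proof (rule ccontr)
    assume "\<not> ?thesis"
    then have "AE b in nu. False" using unit by (auto elim: AE_mp)
    then show False using prob_space.AE_False[OF pn] by simp
  qed
  then obtain b0 where b0: "b0 \<in> space nu" "\<forall>k. b0 k 0 = 1" by blast
  define g where "g = asf_beta mu Y ?x b0"
  have amw: "argmax_on (convex hull B) ?f = {g}"
  proof -
    have "argmax_on (convex hull B) (\<lambda>y. ereal (y \<bullet> idx d b0 ?x) + Dbar mu B D y) = {g}"
      using am xc b0(1) unfolding g_def by blast
    then show ?thesis using idxw[of b0, OF b0(2)] by simp
  qed
  have gin: "g \<in> convex hull B" and gmax: "\<forall>z\<in>convex hull B. ?f z \<le> ?f g"
    using amw unfolding argmax_on_def by auto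
  have ae: "AE b in nu. asf_beta mu Y ?x b = g"
    using unit
  proof (rule AE_mp)
    show "AE b in nu. (\<forall>k. b k 0 = 1) \<longrightarrow> asf_beta mu Y ?x b = g"
    proof (rule AE_I2, rule impI)
      fix b assume bb: "b \<in> space nu" "\<forall>k. b k 0 = 1"
      have "argmax_on (convex hull B) (\<lambda>y. ereal (y \<bullet> idx d b ?x) + Dbar mu B D y) = {asf_beta mu Y ?x b}"
        using am xc bb(1) by blast
      then have "argmax_on (convex hull B) ?f = {asf_beta mu Y ?x b}"
        using idxw[of b, OF bb(2)] by simp
      then show "asf_beta mu Y ?x b = g" using amw by auto
    qed
  qed
  have psf: "pair_sigma_finite nu mu"
    unfolding pair_sigma_finite_def
    using prob_space_imp_sigma_finite[OF pn] prob_space_imp_sigma_finite[OF pm] by auto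
  have intx: "integrable (nu \<Otimes>\<^sub>M mu) (\<lambda>be. Y ?x (fst be) (snd be))"
    using integ xc by (simp add: case_prod_beta')
  have "asf nu mu Y ?x = (\<integral>b. (\<integral>e. Y ?x b e \<partial>mu) \<partial>nu)"
    unfolding asf_def using pair_sigma_finite.integral_fst'[OF psf intx] by simp
  also have "\<dots> = (\<integral>b. g \<partial>nu)"
  proof (rule integral_cong_AE)
    show "(\<lambda>b. \<integral>e. Y ?x b e \<partial>mu) \<in> borel_measurable nu"
      using pair_sigma_finite.integrable_fst'[OF psf intx] by simp
    show "(\<lambda>b. g) \<in> borel_measurable nu" by simp
    show "AE b in nu. (\<integral>e. Y ?x b e \<partial>mu) = g" using ae unfolding asf_beta_def .
  qed
  also have "\<dots> = g" using prob_space.prob_space[OF pn] by simp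
  finally have asfg: "asf nu mu Y ?x = g" .
  obtain y0 where y0: "y0 \<in> convex hull B" "Dbar mu B D y0 \<noteq> - \<infinity>" using ex by blast
  have "?f y0 \<le> ?f g" using gmax y0 by auto
  then have "Dbar mu B D g \<noteq> - \<infinity>" using y0(2) ninf[rule_format, of y0] by auto
  then obtain c where c: "Dbar mu B D g = ereal c" using ninf[rule_format, of g]
    by (cases "Dbar mu B D g") auto
  have Vw: "Vind mu B D w = ?f g"
    unfolding Vind_def
    by (rule antisym) (use gin gmax in \<open>auto intro: SUP_upper SUP_least\<close>)
  show ?thesis
  proof (intro exI conjI allI)
    show "Vind mu B D w = ereal (g \<bullet> w + c)" using Vw c by simp
    fix w'
    have "ereal (g \<bullet> w' + c) \<le> Vind mu B D w'"
      unfolding Vind_def using c gin by (metis (no_types, lifting) SUP_upper plus_ereal.simps(1))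
    moreover have "g \<bullet> w + c + g \<bullet> (w' - w) = g \<bullet> w' + c" by (simp add: inner_diff_right)
    ultimately show "ereal (g \<bullet> w + c + asf nu mu Y ?x \<bullet> (w' - w)) \<le> Vind mu B D w'"
      using asfg by (metis (no_types))
  qed
qed
lemma ereal_box_segment:
  fixes a b t :: real and lo hi :: ereal
  assumes "lo \<le> ereal a" "lo \<le> ereal b" "ereal a \<le> hi" "ereal b \<le> hi" "0 \<le> t" "t \<le> 1"
  shows "lo \<le> ereal (b + t * (a - b)) \<and> ereal (b + t * (a - b)) \<le> hi"
proof -
  have e: "b + t * (a - b) = (1 - t) * b + t * a" by (simp add: algebra_simps)
  have "(1 - t) * min a b \<le> (1 - t) * b" "t * min a b \<le> t * a"
    using assms(5,6) by (auto intro: mult_left_mono)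
  then have m1: "min a b \<le> b + t * (a - b)" unfolding e by (simp add: algebra_simps)
  have "(1 - t) * b \<le> (1 - t) * max a b" "t * a \<le> t * max a b"
    using assms(5,6) by (auto intro: mult_left_mono)
  then have m2: "b + t * (a - b) \<le> max a b" unfolding e by (simp add: algebra_simps)
  have A: "lo \<le> ereal (b + t * (a - b))"
  proof (cases "a \<le> b")
    case True
    then have "ereal a \<le> ereal (b + t * (a - b))" using m1 by (simp add: min_def)
    then show ?thesis using assms(1) by (rule order_trans[rotated])
  next
    case False
    then have "ereal b \<le> ereal (b + t * (a - b))" using m1 by (simp add: min_def)
    then show ?thesis using assms(2) by (rule order_trans[rotated])
  qed
  have B: "ereal (b + t * (a - b)) \<le> hi"
  proof (cases "a \<le> b")
    case True
    then have "ereal (b + t * (a - b)) \<le> ereal b" using m2 by (simp add: max_def)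
    then show ?thesis using assms(4) by (rule order_trans)
  next
    case False
    then have "ereal (b + t * (a - b)) \<le> ereal a" using m2 by (simp add: max_def)
    then show ?thesis using assms(3) by (rule order_trans)
  qed
  show ?thesis using A B by simp
qed

theorem proposition2:
  fixes d :: "'k::finite \<Rightarrow> nat"
    and xlo xhi :: "'k \<Rightarrow> ereal"
    and nu1 :: "('k \<Rightarrow> nat \<Rightarrow> real) measure" and mu1 :: "'e measure"
    and B1 :: "(real^'k) set" and D1 :: "real^'k \<Rightarrow> 'e \<Rightarrow> ereal"
    and Y1 :: "('k \<Rightarrow> nat \<Rightarrow> real) \<Rightarrow> ('k \<Rightarrow> nat \<Rightarrow> real) \<Rightarrow> 'e \<Rightarrow> real^'k"
    and nu2 :: "('k \<Rightarrow> nat \<Rightarrow> real) measure" and mu2 :: "'f measure"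
    and B2 :: "(real^'k) set" and D2 :: "real^'k \<Rightarrow> 'f \<Rightarrow> ereal"
    and Y2 :: "('k \<Rightarrow> nat \<Rightarrow> real) \<Rightarrow> ('k \<Rightarrow> nat \<Rightarrow> real) \<Rightarrow> 'f \<Rightarrow> real^'k"
    and u u' :: "real^'k"
  assumes model1: "rc_model d nu1 mu1 B1 D1 Y1" and A2_1: "assumption2 d nu1 mu1 B1 D1 Y1"
    and unit1: "AE b in nu1. \<forall>k. b k 0 = 1"
    and model2: "rc_model d nu2 mu2 B2 D2 Y2" and A2_2: "assumption2 d nu2 mu2 B2 D2 Y2"
    and unit2: "AE b in nu2. \<forall>k. b k 0 = 1"
    and bounds: "\<forall>k. xlo k \<le> xhi k"
    and same_asf: "\<forall>x\<in>covariates d.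
          (\<forall>k. ereal (x k 0) \<in> {xlo k..xhi k} \<and> (\<forall>j>0. x k j = 0)) \<longrightarrow>
          asf nu1 mu1 Y1 x = asf nu2 mu2 Y2 x"
    and u_box: "\<forall>k. ereal (u $ k) \<in> {xlo k..xhi k}"
    and u'_box: "\<forall>k. ereal (u' $ k) \<in> {xlo k..xhi k}"
  shows "Vind mu1 B1 D1 u - Vind mu1 B1 D1 u' = Vind mu2 B2 D2 u - Vind mu2 B2 D2 u'"
proof -
  define V1 where "V1 w = real_of_ereal (Vind mu1 B1 D1 w)" for w
  define V2 where "V2 w = real_of_ereal (Vind mu2 B2 D2 w)" for w
  define g1 where "g1 w = asf nu1 mu1 Y1 (xw w)" for w
  define g2 where "g2 w = asf nu2 mu2 Y2 (xw w)" for w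
  have F1: "Vind mu1 B1 D1 w = ereal (V1 w) \<and> (\<forall>w'. V1 w + g1 w \<bullet> (w' - w) \<le> V1 w')" for w
  proof -
    obtain V where V: "Vind mu1 B1 D1 w = ereal V"
      "\<forall>w'. ereal (V + asf nu1 mu1 Y1 (xw w) \<bullet> (w' - w)) \<le> Vind mu1 B1 D1 w'"
      using model_facts[OF model1 A2_1 unit1, of w] by blast
    have fin: "Vind mu1 B1 D1 w' = ereal (V1 w')" for w'
    proof -
      obtain V' where "Vind mu1 B1 D1 w' = ereal V'"
        using model_facts[OF model1 A2_1 unit1, of w'] by blast
      then show ?thesis unfolding V1_def by simp
    qed
    have Vv: "V1 w = V" unfolding V1_def using V(1) by simp
    show ?thesis
    proof (intro conjI allI)
      show "Vind mu1 B1 D1 w = ereal (V1 w)" using fin .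
      fix w'
      have "ereal (V + g1 w \<bullet> (w' - w)) \<le> Vind mu1 B1 D1 w'"
        using V(2) unfolding g1_def by blast
      then have "V + g1 w \<bullet> (w' - w) \<le> V1 w'" unfolding fin[of w'] by simp
      then show "V1 w + g1 w \<bullet> (w' - w) \<le> V1 w'" using Vv by simp
    qed
  qed
  have F2: "Vind mu2 B2 D2 w = ereal (V2 w) \<and> (\<forall>w'. V2 w + g2 w \<bullet> (w' - w) \<le> V2 w')" for w
  proof -
    obtain V where V: "Vind mu2 B2 D2 w = ereal V"
      "\<forall>w'. ereal (V + asf nu2 mu2 Y2 (xw w) \<bullet> (w' - w)) \<le> Vind mu2 B2 D2 w'"
      using model_facts[OF model2 A2_2 unit2, of w] by blast
    have fin: "Vind mu2 B2 D2 w' = ereal (V2 w')" for w'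
    proof -
      obtain V' where "Vind mu2 B2 D2 w' = ereal V'"
        using model_facts[OF model2 A2_2 unit2, of w'] by blast
      then show ?thesis unfolding V2_def by simp
    qed
    have Vv: "V2 w = V" unfolding V2_def using V(1) by simp
    show ?thesis
    proof (intro conjI allI)
      show "Vind mu2 B2 D2 w = ereal (V2 w)" using fin .
      fix w'
      have "ereal (V + g2 w \<bullet> (w' - w)) \<le> Vind mu2 B2 D2 w'"
        using V(2) unfolding g2_def by blast
      then have "V + g2 w \<bullet> (w' - w) \<le> V2 w'" unfolding fin[of w'] by simp
      then show "V2 w + g2 w \<bullet> (w' - w) \<le> V2 w'" using Vv by simp
    qed
  qed
  define p where "p t = u' + t *\<^sub>R (u - u')" for t :: real
  have d1: "\<forall>k. 1 \<le> d k" using model1 unfolding rc_model_def by auto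
  have geq: "g1 (p t) = g2 (p t)" if t: "0 \<le> t" "t \<le> 1" for t
  proof -
    have xc: "xw (p t) \<in> covariates d" using d1 unfolding covariates_def xw_def
      by (auto, metis not_one_le_zero)
    have "\<forall>k. ereal (xw (p t) k 0) \<in> {xlo k..xhi k} \<and> (\<forall>j>0. xw (p t) k j = 0)"
    proof
      fix k
      have "xlo k \<le> ereal (u' $ k + t * (u $ k - u' $ k)) \<and> ereal (u' $ k + t * (u $ k - u' $ k)) \<le> xhi k"
        using ereal_box_segment[of "xlo k" "u $ k" "u' $ k" "xhi k" t] u_box u'_box t by auto
      then show "ereal (xw (p t) k 0) \<in> {xlo k..xhi k} \<and> (\<forall>j>0. xw (p t) k j = 0)"
        by (simp add: xw_def p_def algebra_simps)
    qed
    then show ?thesis using same_asf xc unfolding g1_def g2_def by blast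
  qed
  define s where "s t = g1 (p t) \<bullet> (u - u')" for t
  have pd: "p r - p t = (r - t) *\<^sub>R (u - u')" for r t
    unfolding p_def by (simp add: algebra_simps)
  have sub1: "V1 (p t) + s t * (r - t) \<le> V1 (p r)" for t r
  proof -
    have "V1 (p t) + g1 (p t) \<bullet> (p r - p t) \<le> V1 (p r)" using F1[of "p t"] by blast
    then show ?thesis unfolding pd s_def by (simp add: inner_scaleR_right mult.commute)
  qed
  have sub2: "V2 (p t) + s t * (r - t) \<le> V2 (p r)" if "0 \<le> t" "t \<le> 1" for t r
  proof -
    have "V2 (p t) + g2 (p t) \<bullet> (p r - p t) \<le> V2 (p r)" using F2[of "p t"] by blast
    then show ?thesis unfolding pd s_def geq[OF that] by (simp add: inner_scaleR_right mult.commute)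
  qed
  have eq: "(\<lambda>t. V1 (p t)) 1 - (\<lambda>t. V1 (p t)) 0 = (\<lambda>t. V2 (p t)) 1 - (\<lambda>t. V2 (p t)) 0"
    by (rule common_subgradient[where s = s]) (use sub1 sub2 in auto)
  have p1: "p 1 = u" and p0: "p 0 = u'" unfolding p_def by auto
  show ?thesis using eq F1[of u] F1[of u'] F2[of u] F2[of u'] unfolding p1 p0 by simp
qed

end
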